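(* Let $R\in\{\mathrm{ML},\mathrm{wML},\mathrm{C},\mathrm{S}\}$, let $p,q\in[0,1]$ be real numbers with $p<q$, let $I\in\mathscr I$ be an interval forecast with $I\subseteq(0,1)$, let $\mathscr S$ be a countable set of selection processes with $\mathscr S\supseteq\mathscr S^{p,q}_{\mathscr F_R}$, and let $\varpi\in\Omega$ be a path that is $\mathscr S$-random for $I$. Then a path $\omega\in\Omega$ is $R$-random for $\varphi^{\varpi}_{p,q}$ if and only if it is $R$-random for $[p,q]$.
   Context: Notation: $\mathbb N=\{1,2,\dots\}$, $\mathbb N_0=\mathbb N\cup\{0\}$. $\Omega=\{0,1\}^{\mathbb N}$ is the set of paths $\omega=(\omega_1,\omega_2,\dots)$; $\omega_{1:n}=(\omega_1,\dots,\omega_n)$ and $\omega_{1:0}=\square$ (the empty sequence). $\mathbb S=\bigcup_{n\in\mathbb N_0}\{0,1\}^n$ is the set of situations, $|s|$ the length of $s$, $sx$ the concatenation. $\mathscr I$ is the set of closed intervals $I\subseteq[0,1]$ (singletons $[r,r]$ are identified with $r$). For $r\in[0,1]$ and $f:\{0,1\}\to\mathbb R$, $E_r(f)=rf(1)+(1-r)f(0)$; for $I\in\mathscr I$, $\overline E_I(f)=\max_{r\in I}E_r(f)$. A forecasting system is a map $\varphi:\mathbb S\to\mathscr I$; $\underline\varphi(s)=\min\varphi(s)$, $\overline\varphi(s)=\max\varphi(s)$; a stationary (constant) forecasting system with value $I$ is identified with $I$. A real process is a map $F:\mathbb S\to\mathbb R$; $\Delta F(s)$ is the function $x\mapsto F(sx)-F(s)$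 on $\{0,1\}$. $M$ is a supermartingale for $\varphi$ if $\overline E_{\varphi(s)}(\Delta M(s))\le0$ for all $s\in\mathbb S$. A test process is a non-negative real process $F$ with $F(\square)=1$; a test supermartingale for $\varphi$ is a test process that is a supermartingale for $\varphi$. A multiplier process $D$ assigns to each $s\in\mathbb S$ a function $D(s):\{0,1\}\to[0,\infty)$; it generates the test process $F$ with $F(\square)=1$ and $F(sx)=F(s)D(s)(x)$. Computability: a map from a countable effectively encoded domain $\mathscr D$ (e.g. $\mathbb N_0$, $\mathbb S$, $\mathbb S\times\mathbb N_0$, $\mathbb S\times\{0,1\}\times\mathbb N_0$) to $\mathbb N_0$ or $\mathbb Q$ is recursive if it is computable by a Turing machine. A real map $r$ on $\mathscr D$ is lower semicomputable if there is a recursive rational map $q$ on $\mathscr D\times\mathbb N_0$ with $q(d,n)\le q(d,n+1)$ and $r(d)=\lim_n q(d,n)$ for all $d,n$; it is computable if there is a recursive rational $q$ with $|r(d)-q(d,n)|<2^{-n}$ for all $d,n$. A multiplier process is lower semicomputable if $(s,x)\mapsto D(s)(x)$ is. $\mathscr F_{\mathrm{ML}}$ is the set of lower semicomputable test processes, $\mathscr F_{\mathrm{wML}}$ the set of test processes generated by lower semicomputable multiplier processes, and $\mathscr F_{\mathrm C}=\mathscr F_{\mathrm S}$ the set of positive, rational-valued, recursive test processes. For $R\in\{\mathrm{ML},\mathrm{wML},\mathrm C,\mathrm S\}$, $\overline{\mathbb T}_R(\varphi)$ is the set of elements of $\mathscr F_R$ that are test supermartingales for $\varphi$. For $R\in\{\mathrm{ML},\mathrm{wML},\mathrm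 C\}$, a path $\omega$ is $R$-random for $\varphi$ if no $T\in\overline{\mathbb T}_R(\varphi)$ has $\limsup_{n\to\infty}T(\omega_{1:n})=\infty$. A real growth function is a computable, non-decreasing, unbounded map $\tau:\mathbb N_0\to[0,\infty)$; $\omega$ is S-random for $\varphi$ if there are no $T\in\overline{\mathbb T}_{\mathrm S}(\varphi)$ and real growth function $\tau$ with $\limsup_{n\to\infty}[T(\omega_{1:n})-\tau(n)]\ge0$. $R$-random for $I\in\mathscr I$ means $R$-random for the stationary forecasting system with value $I$. Selection processes: a selection process is a map $S:\mathbb S\to\{0,1\}$; it is temporal if $S(s)$ depends only on $|s|$ (written $S(n)$). For a countable set $\mathscr S$ of selection processes, a path $\omega$ is $\mathscr S$-random for $\varphi$ if for every $S\in\mathscr S$ with $\lim_{n}\sum_{k=0}^{n-1}S(\omega_{1:k})=\infty$ we have $\liminf_{n}\frac{\sum_{k=0}^{n-1}S(\omega_{1:k})[\omega_{k+1}-\underline\varphi(\omega_{1:k})]}{\sum_{k=0}^{n-1}S(\omega_{1:k})}\ge0$ and $\limsup_{n}\frac{\sum_{k=0}^{n-1}S(\omega_{1:k})[\omega_{k+1}-\overline\varphi(\omega_{1:k})]}{\sum_{k=0}^{n-1}S(\omega_{1:k})}\le0$. Special objects: for a real process $F$ and $r\in[0,1]$, $S^r_F$ is the temporal selection process with $S^r_F(n)=1$ if $E_r(\Delta F(s))>0$ for some $s$ with $|s|=n$, and $S^r_F(n)=0$ otherwise. For a countable set $\mathscr F$ of real processes, $\mathscr S^{p,q}_{\mathscr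 F}=\{S^r_F: F\in\mathscr F,\ r\in\{p,q\}\}$. For $p,q\in[0,1]$ and $\varpi\in\Omega$, $\varphi^\varpi_{p,q}$ is the precise forecasting system with $\varphi^\varpi_{p,q}(s)=p$ if $\varpi_{|s|+1}=0$ and $\varphi^\varpi_{p,q}(s)=q$ if $\varpi_{|s|+1}=1$. *)

theory Defs
  imports "HOL-Analysis.Analysis" "HOL-Library.Nat_Bijection"
begin

text \<open>recfn n g: g is a total recursive function of arity n (arguments given as a list).
  By the Church-Turing thesis (Kleene), these are exactly the Turing-computable total functions.\<close>

inductive recfn :: "nat \<Rightarrow> (nat list \<Rightarrow> nat) \<Rightarrow> bool" where
  rzero: "recfn n (\<lambda>_. 0)"
| rsucc: "recfn 1 (\<lambda>xs. Suc (hd xs))"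
| rproj: "i < n \<Longrightarrow> recfn n (\<lambda>xs. xs ! i)"
| rcomp: "recfn m f \<Longrightarrow> length gs = m \<Longrightarrow> (\<forall>g\<in>set gs. recfn n g)
           \<Longrightarrow> recfn n (\<lambda>xs. f (map (\<lambda>g. g xs) gs))"
| rprim: "recfn n f \<Longrightarrow> recfn (Suc (Suc n)) g
           \<Longrightarrow> recfn (Suc n) (\<lambda>xs. rec_nat (f (tl xs)) (\<lambda>y r. g (r # y # tl xs)) (hd xs))"
| rmu: "recfn (Suc n) f \<Longrightarrow> (\<forall>xs. length xs = n \<longrightarrow> (\<exists>y. f (y # xs) = 0))
           \<Longrightarrow> recfn n (\<lambda>xs. LEAST y. f (y # xs) = 0)"

primrec enc_sit :: "bool list \<Rightarrow> nat" where
  "enc_sit [] = 0"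
| "enc_sit (b # s) = 2 * enc_sit s + (if b then 2 else 1)"

definition enc_pair :: "('a \<Rightarrow> nat) \<Rightarrow> ('b \<Rightarrow> nat) \<Rightarrow> 'a \<times> 'b \<Rightarrow> nat" where
  "enc_pair e1 e2 = (\<lambda>(x, y). prod_encode (e1 x, e2 y))"

definition enc_bool :: "bool \<Rightarrow> nat" where
  "enc_bool b = (if b then 1 else 0)"

definition recursive_nat :: "('d \<Rightarrow> nat) \<Rightarrow> ('d \<Rightarrow> nat) \<Rightarrow> bool" where
  "recursive_nat enc f \<longleftrightarrow> (\<exists>g. recfn 1 g \<and> (\<forall>d. f d = g [enc d]))"

text \<open>A rational map (values stored as reals) is recursive if numerator/denominator data are.\<close>
definition recursive_rat :: "('d \<Rightarrow> nat) \<Rightarrow> ('d \<Rightarrow> real) \<Rightarrow> bool" where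
  "recursive_rat enc f \<longleftrightarrow> (\<exists>a b c. recursive_nat enc a \<and> recursive_nat enc b \<and> recursive_nat enc c \<and>
      (\<forall>d. f d = (real (a d) - real (b d)) / real (Suc (c d))))"

definition lower_semicomputable :: "('d \<Rightarrow> nat) \<Rightarrow> ('d \<Rightarrow> real) \<Rightarrow> bool" where
  "lower_semicomputable enc r \<longleftrightarrow> (\<exists>q. recursive_rat (enc_pair enc id) q \<and>
      (\<forall>d n. q (d, n) \<le> q (d, Suc n)) \<and> (\<forall>d. (\<lambda>n. q (d, n)) \<longlonglongrightarrow> r d))"

definition computable_real :: "('d \<Rightarrow> nat) \<Rightarrow> ('d \<Rightarrow> real) \<Rightarrow> bool" where
  "computable_real enc r \<longleftrightarrow> (\<exists>q. recursive_rat (enc_pair enc id) q \<and>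
      (\<forall>d n. \<bar>r d - q (d, n)\<bar> < 1 / 2 ^ n))"

text \<open>Situations are bool lists (True = 1, False = 0); paths are nat \<Rightarrow> bool with
  omega 0 = omega_1; an interval [a,b] is the pair (a,b).\<close>

definition prefix :: "(nat \<Rightarrow> bool) \<Rightarrow> nat \<Rightarrow> bool list" where
  "prefix \<omega> n = map \<omega> [0..<n]"

definition Ex_r :: "real \<Rightarrow> (bool \<Rightarrow> real) \<Rightarrow> real" where
  "Ex_r r f = r * f True + (1 - r) * f False"

definition Eup :: "real \<times> real \<Rightarrow> (bool \<Rightarrow> real) \<Rightarrow> real" where
  "Eup I f = Sup ((\<lambda>r. Ex_r r f) ` {fst I..snd I})"

definition dproc :: "(bool list \<Rightarrow> real) \<Rightarrow> bool list \<Rightarrow> bool \<Rightarrow> real" where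
  "dproc F s = (\<lambda>x. F (s @ [x]) - F s)"

definition supermartingale :: "(bool list \<Rightarrow> real \<times> real) \<Rightarrow> (bool list \<Rightarrow> real) \<Rightarrow> bool" where
  "supermartingale \<phi> M \<longleftrightarrow> (\<forall>s. Eup (\<phi> s) (dproc M s) \<le> 0)"

definition test_process :: "(bool list \<Rightarrow> real) \<Rightarrow> bool" where
  "test_process F \<longleftrightarrow> (\<forall>s. F s \<ge> 0) \<and> F [] = 1"

definition generated :: "(bool list \<Rightarrow> bool \<Rightarrow> real) \<Rightarrow> bool list \<Rightarrow> real" where
  "generated D s = (\<Prod>k<length s. D (take k s) (s ! k))"

datatype rtype = R_ML | R_wML | R_C | R_S

definition F_ML :: "(bool list \<Rightarrow> real) set" where
  "F_ML = {F. test_process F \<and> lower_semicomputable enc_sit F}"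

definition F_wML :: "(bool list \<Rightarrow> real) set" where
  "F_wML = {generated D | D. (\<forall>s x. D s x \<ge> 0) \<and>
      lower_semicomputable (enc_pair enc_sit enc_bool) (\<lambda>(s, x). D s x)}"

definition F_C :: "(bool list \<Rightarrow> real) set" where
  "F_C = {F. test_process F \<and> (\<forall>s. F s > 0) \<and> recursive_rat enc_sit F}"

fun Fset :: "rtype \<Rightarrow> (bool list \<Rightarrow> real) set" where
  "Fset R_ML = F_ML"
| "Fset R_wML = F_wML"
| "Fset R_C = F_C"
| "Fset R_S = F_C"

definition Tbar :: "rtype \<Rightarrow> (bool list \<Rightarrow> real \<times> real) \<Rightarrow> (bool list \<Rightarrow> real) set" where
  "Tbar R \<phi> = {T \<in> Fset R. supermartingale \<phi> T}"

definition growth_function :: "(nat \<Rightarrow> real) \<Rightarrow> bool" where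
  "growth_function \<tau> \<longleftrightarrow> computable_real id \<tau> \<and> mono \<tau> \<and> (\<forall>n. \<tau> n \<ge> 0) \<and> \<not> bdd_above (range \<tau>)"

definition random :: "rtype \<Rightarrow> (bool list \<Rightarrow> real \<times> real) \<Rightarrow> (nat \<Rightarrow> bool) \<Rightarrow> bool" where
  "random R \<phi> \<omega> = (if R = R_S then
      \<not> (\<exists>T\<in>Tbar R_S \<phi>. \<exists>\<tau>. growth_function \<tau> \<and>
            limsup (\<lambda>n. ereal (T (prefix \<omega> n) - \<tau> n)) \<ge> 0)
    else \<not> (\<exists>T\<in>Tbar R \<phi>. limsup (\<lambda>n. ereal (T (prefix \<omega> n))) = \<infinity>))"

definition sel_random :: "(bool list \<Rightarrow> bool) set \<Rightarrow> (bool list \<Rightarrow> real \<times> real) \<Rightarrow> (nat \<Rightarrow> bool) \<Rightarrow> bool" where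
  "sel_random \<SS> \<phi> \<omega> \<longleftrightarrow> (\<forall>Sel\<in>\<SS>.
     filterlim (\<lambda>n. \<Sum>k<n. of_bool (Sel (prefix \<omega> k)) :: real) at_top sequentially \<longrightarrow>
     (liminf (\<lambda>n. ereal ((\<Sum>k<n. of_bool (Sel (prefix \<omega> k)) * (of_bool (\<omega> k) - fst (\<phi> (prefix \<omega> k))))
                      / (\<Sum>k<n. of_bool (Sel (prefix \<omega> k))))) \<ge> 0 \<and>
      limsup (\<lambda>n. ereal ((\<Sum>k<n. of_bool (Sel (prefix \<omega> k)) * (of_bool (\<omega> k) - snd (\<phi> (prefix \<omega> k))))
                      / (\<Sum>k<n. of_bool (Sel (prefix \<omega> k))))) \<le> 0))"

definition sel_temporal :: "real \<Rightarrow> (bool list \<Rightarrow> real) \<Rightarrow> bool list \<Rightarrow> bool" where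
  "sel_temporal r F s \<longleftrightarrow> (\<exists>t. length t = length s \<and> Ex_r r (dproc F t) > 0)"

definition sel_pq :: "real \<Rightarrow> real \<Rightarrow> (bool list \<Rightarrow> real) set \<Rightarrow> (bool list \<Rightarrow> bool) set" where
  "sel_pq p q FF = {sel_temporal r F | F r. F \<in> FF \<and> r \<in> {p, q}}"

definition phi_pq :: "(nat \<Rightarrow> bool) \<Rightarrow> real \<Rightarrow> real \<Rightarrow> bool list \<Rightarrow> real \<times> real" where
  "phi_pq \<pi> p q s = (if \<pi> (length s) then (q, q) else (p, p))"

end

theory Submission
  imports Defs
begin


definition cn :: "nat \<Rightarrow> (nat list \<Rightarrow> nat) \<Rightarrow> bool" where
  "cn n h \<longleftrightarrow> (\<exists>g. recfn n g \<and> (\<forall>xs. length xs = n \<longrightarrow> g xs = h xs))"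

lemma cn_cong: "cn n f \<Longrightarrow> (\<And>xs. length xs = n \<Longrightarrow> f xs = g xs) \<Longrightarrow> cn n g"
  unfolding cn_def by metis

lemma recfn_cn: "recfn n g \<Longrightarrow> cn n g"
  unfolding cn_def by blast

lemma cn_zero: "cn n (\<lambda>_. 0)" by (rule recfn_cn) (rule recfn.rzero)
lemma cn_succ: "cn 1 (\<lambda>xs. Suc (hd xs))" by (rule recfn_cn) (rule recfn.rsucc)
lemma cn_proj: "i < n \<Longrightarrow> cn n (\<lambda>xs. xs ! i)" by (rule recfn_cn) (rule recfn.rproj)

lemma cn_list:
  assumes "\<forall>g\<in>set gs. cn n g"
  shows "\<exists>gs'. length gs' = length gs \<and> (\<forall>g\<in>set gs'. recfn n g) \<and>
     (\<forall>xs. length xs = n \<longrightarrow> map (\<lambda>g. g xs) gs' = map (\<lambda>g. g xs) gs)"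
  using assms
proof (induction gs)
  case Nil then show ?case by auto
next
  case (Cons g gs)
  then obtain gs' where gs': "length gs' = length gs" "\<forall>g\<in>set gs'. recfn n g"
     "\<forall>xs. length xs = n \<longrightarrow> map (\<lambda>g. g xs) gs' = map (\<lambda>g. g xs) gs" by auto
  from Cons.prems obtain g' where "recfn n g'" "\<forall>xs. length xs = n \<longrightarrow> g' xs = g xs"
    unfolding cn_def by auto
  with gs' show ?case by (intro exI[of _ "g' # gs'"]) auto
qed

lemma cn_comp:
  assumes "cn m f" "length gs = m" "\<forall>g\<in>set gs. cn n g"
  shows "cn n (\<lambda>xs. f (map (\<lambda>g. g xs) gs))"
proof -
  obtain gs' where gs': "length gs' = length gs" "\<forall>g\<in>set gs'. recfn n g"
     "\<forall>xs. length xs = n \<longrightarrow> map (\<lambda>g. g xs) gs' = map (\<lambda>g. g xs) gs"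
    using cn_list[OF assms(3)] by blast
  obtain f' where f': "recfn m f'" "\<forall>xs. length xs = m \<longrightarrow> f' xs = f xs"
    using assms(1) unfolding cn_def by auto
  have "recfn n (\<lambda>xs. f' (map (\<lambda>g. g xs) gs'))"
    using recfn.rcomp[OF f'(1)] gs' assms(2) by auto
  moreover have "\<forall>xs. length xs = n \<longrightarrow> f' (map (\<lambda>g. g xs) gs') = f (map (\<lambda>g. g xs) gs)"
    using gs' f' assms(2) by auto
  ultimately show ?thesis unfolding cn_def by blast
qed

lemma cn_prim:
  assumes "cn n f" "cn (Suc (Suc n)) g"
  shows "cn (Suc n) (\<lambda>xs. rec_nat (f (tl xs)) (\<lambda>y r. g (r # y # tl xs)) (hd xs))"
proof -
  obtain f' where f': "recfn n f'" "\<forall>xs. length xs = n \<longrightarrow> f' xs = f xs"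
    using assms(1) unfolding cn_def by auto
  obtain g' where g': "recfn (Suc (Suc n)) g'" "\<forall>xs. length xs = Suc (Suc n) \<longrightarrow> g' xs = g xs"
    using assms(2) unfolding cn_def by auto
  have "recfn (Suc n) (\<lambda>xs. rec_nat (f' (tl xs)) (\<lambda>y r. g' (r # y # tl xs)) (hd xs))"
    by (rule recfn.rprim[OF f'(1) g'(1)])
  moreover have "\<forall>xs. length xs = Suc n \<longrightarrow> rec_nat (f' (tl xs)) (\<lambda>y r. g' (r # y # tl xs)) (hd xs)
      = rec_nat (f (tl xs)) (\<lambda>y r. g (r # y # tl xs)) (hd xs)"
    using f' g' by auto
  ultimately show ?thesis unfolding cn_def by blast
qed

lemma cn_mu:
  assumes "cn (Suc n) f" "\<forall>xs. length xs = n \<longrightarrow> (\<exists>y. f (y # xs) = 0)"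
  shows "cn n (\<lambda>xs. LEAST y. f (y # xs) = 0)"
proof -
  obtain f' where f': "recfn (Suc n) f'" "\<forall>xs. length xs = Suc n \<longrightarrow> f' xs = f xs"
    using assms(1) unfolding cn_def by auto
  have "recfn n (\<lambda>xs. LEAST y. f' (y # xs) = 0)"
    by (rule recfn.rmu[OF f'(1)]) (use assms(2) f'(2) in auto)
  moreover have "\<forall>xs. length xs = n \<longrightarrow> (LEAST y. f' (y # xs) = 0) = (LEAST y. f (y # xs) = 0)"
    using f' by auto
  ultimately show ?thesis unfolding cn_def by blast
qed

definition cn1 :: "(nat \<Rightarrow> nat) \<Rightarrow> bool" where "cn1 h \<longleftrightarrow> cn 1 (\<lambda>xs. h (hd xs))"
definition cn2 :: "(nat \<Rightarrow> nat \<Rightarrow> nat) \<Rightarrow> bool" where "cn2 h \<longleftrightarrow> cn 2 (\<lambda>xs. h (xs!0) (xs!1))"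
definition cn3 :: "(nat \<Rightarrow> nat \<Rightarrow> nat \<Rightarrow> nat) \<Rightarrow> bool" where
  "cn3 h \<longleftrightarrow> cn 3 (\<lambda>xs. h (xs!0) (xs!1) (xs!2))"

lemma cn_comp1: "cn1 h \<Longrightarrow> cn n f \<Longrightarrow> cn n (\<lambda>xs. h (f xs))"
  unfolding cn1_def using cn_comp[of 1 "\<lambda>xs. h (hd xs)" "[f]" n] by simp

lemma cn_comp2: "cn2 h \<Longrightarrow> cn n f \<Longrightarrow> cn n g \<Longrightarrow> cn n (\<lambda>xs. h (f xs) (g xs))"
  unfolding cn2_def using cn_comp[of 2 "\<lambda>xs. h (xs!0) (xs!1)" "[f,g]" n] by simp

lemma cn_comp3: "cn3 h \<Longrightarrow> cn n f \<Longrightarrow> cn n g \<Longrightarrow> cn n k \<Longrightarrow> cn n (\<lambda>xs. h (f xs) (g xs) (k xs))"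
  unfolding cn3_def using cn_comp[of 3 "\<lambda>xs. h (xs!0) (xs!1) (xs!2)" "[f,g,k]" n] by (simp add: numeral_3_eq_3)

lemma cn_const: "cn n (\<lambda>_. c)"
proof (induction c)
  case 0 then show ?case by (rule cn_zero)
next
  case (Suc c)
  have "cn1 Suc" unfolding cn1_def by (rule cn_succ)
  from cn_comp1[OF this Suc] show ?case .
qed

lemma cn1_id: "cn1 (\<lambda>x. x)"
  unfolding cn1_def by (rule cn_cong[OF cn_proj[of 0 1]]) (auto simp: length_Suc_conv)

lemma cn1_comp: "cn1 h \<Longrightarrow> cn1 f \<Longrightarrow> cn1 (\<lambda>x. h (f x))"
  unfolding cn1_def[of "\<lambda>x. h (f x)"] using cn_comp1[of h 1 "\<lambda>xs. f (hd xs)"] cn1_def by auto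

lemma cn1_comp2: "cn2 h \<Longrightarrow> cn1 f \<Longrightarrow> cn1 g \<Longrightarrow> cn1 (\<lambda>x. h (f x) (g x))"
  unfolding cn1_def[of "\<lambda>x. h (f x) (g x)"] using cn_comp2[of h 1 "\<lambda>xs. f (hd xs)" "\<lambda>xs. g (hd xs)"] cn1_def by auto

lemma cn1_const: "cn1 (\<lambda>_. c)" unfolding cn1_def by (rule cn_const)

lemma cn_x0: "cn (Suc n) (\<lambda>xs. xs!0)" by (rule cn_proj) simp
lemma cn_x1: "cn (Suc (Suc n)) (\<lambda>xs. xs!1)" by (rule cn_proj) simp
lemma cn_x2: "cn (Suc (Suc (Suc n))) (\<lambda>xs. xs!2)" by (rule cn_proj) simp
lemma cn_x3: "cn (Suc (Suc (Suc (Suc n)))) (\<lambda>xs. xs!3)" by (rule cn_proj) simp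

lemma prim1:
  assumes "cn2 g"
  shows "cn1 (\<lambda>x. rec_nat c (\<lambda>y r. g r y) x)"
proof -
  have g: "cn (Suc (Suc 0)) (\<lambda>xs. g (xs!0) (xs!1))" using assms unfolding cn2_def by (simp add: numeral_2_eq_2)
  have "cn (Suc 0) (\<lambda>xs. rec_nat ((\<lambda>_. c) (tl xs)) (\<lambda>y r. (\<lambda>xs. g (xs!0) (xs!1)) (r # y # tl xs)) (hd xs))"
    by (rule cn_prim[OF cn_const g])
  then show ?thesis unfolding cn1_def by simp
qed

lemma prim2:
  assumes "cn1 f" "cn3 g"
  shows "cn2 (\<lambda>x z. rec_nat (f z) (\<lambda>y r. g r y z) x)"
proof -
  have f: "cn (Suc 0) (\<lambda>xs. f (hd xs))" using assms unfolding cn1_def by simp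
  have g: "cn (Suc (Suc (Suc 0))) (\<lambda>xs. g (xs!0) (xs!1) (xs!2))" using assms unfolding cn3_def by (simp add: numeral_3_eq_3)
  have "cn (Suc (Suc 0)) (\<lambda>xs. rec_nat ((\<lambda>xs. f (hd xs)) (tl xs)) (\<lambda>y r. (\<lambda>xs. g (xs!0) (xs!1) (xs!2)) (r # y # tl xs)) (hd xs))"
    by (rule cn_prim[OF f g])
  note h = this
  show ?thesis unfolding cn2_def numeral_2_eq_2
    by (rule cn_cong[OF h]) (auto simp: length_Suc_conv)
qed

lemma cn3_cond: "cn3 (\<lambda>c x y. rec_nat x (\<lambda>i r. y) c)"
proof -
  have f: "cn (Suc (Suc 0)) (\<lambda>xs. xs!0)" by (rule cn_x0)
  have g: "cn (Suc (Suc (Suc (Suc 0)))) (\<lambda>xs. xs!3)" by (rule cn_x3)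
  have "cn (Suc (Suc (Suc 0))) (\<lambda>xs. rec_nat ((\<lambda>xs. xs!0) (tl xs)) (\<lambda>y r. (\<lambda>xs. xs!3) (r # y # tl xs)) (hd xs))"
    by (rule cn_prim[OF f g])
  note h = this
  show ?thesis unfolding cn3_def numeral_3_eq_3
    by (rule cn_cong[OF h]) (auto simp: length_Suc_conv numeral_2_eq_2)
qed

lemma cn3_if: "cn3 (\<lambda>c x y. if c = 0 then x else y)"
proof -
  have "rec_nat x (\<lambda>i r. y) c = (if c = 0 then x else y)" for c x y :: nat by (cases c) auto
  then show ?thesis using cn3_cond by simp
qed

lemma cn2_I: "cn 2 (\<lambda>xs. h (xs!0) (xs!1)) \<Longrightarrow> cn2 h" unfolding cn2_def .
lemma cn3_I: "cn 3 (\<lambda>xs. h (xs!0) (xs!1) (xs!2)) \<Longrightarrow> cn3 h" unfolding cn3_def .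

lemma cn2_add: "cn2 (\<lambda>x y. x + y)"
proof -
  have s: "cn1 Suc" unfolding cn1_def by (rule cn_succ)
  have "cn3 (\<lambda>r y z. Suc r)" by (rule cn3_I, rule cn_comp1[OF s], rule cn_proj) simp
  from prim2[OF cn1_id this] have "cn2 (\<lambda>x z. rec_nat z (\<lambda>y r. Suc r) x)" .
  moreover have "rec_nat y (\<lambda>i r. Suc r) x = x + y" for x y :: nat by (induction x) auto
  ultimately show ?thesis by simp
qed

lemma cn2_mult: "cn2 (\<lambda>x y. x * y)"
proof -
  have "cn3 (\<lambda>r y z. r + z)" by (rule cn3_I, rule cn_comp2[OF cn2_add]; rule cn_proj) simp_all
  from prim2[OF cn1_const this] have "cn2 (\<lambda>x z. rec_nat 0 (\<lambda>y r. r + z) x)" .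
  moreover have "rec_nat 0 (\<lambda>i r. r + y) x = x * y" for x y :: nat by (induction x) auto
  ultimately show ?thesis by simp
qed

lemma cn1_pred: "cn1 (\<lambda>x. x - 1)"
proof -
  have "cn2 (\<lambda>r y. y)" by (rule cn2_I, rule cn_proj) simp
  from prim1[OF this] have "cn1 (\<lambda>x. rec_nat 0 (\<lambda>y r. y) x)" .
  moreover have "rec_nat 0 (\<lambda>y r. y) x = x - 1" for x :: nat by (cases x) auto
  ultimately show ?thesis by simp
qed

lemma cn2_swap: "cn2 h \<Longrightarrow> cn2 (\<lambda>x y. h y x)"
  by (rule cn2_I, rule cn_comp2) (auto intro: cn_proj simp: cn2_def)

lemma cn2_minus: "cn2 (\<lambda>x y. x - y)"
proof -
  have "cn3 (\<lambda>r y z. r - 1)" by (rule cn3_I, rule cn_comp1[OF cn1_pred], rule cn_proj) simp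
  from prim2[OF cn1_id this] have "cn2 (\<lambda>x z. rec_nat z (\<lambda>y r. r - 1) x)" .
  moreover have "rec_nat z (\<lambda>y r. r - 1) x = z - x" for x z :: nat by (induction x) auto
  ultimately have "cn2 (\<lambda>x z. z - x)" by simp
  from cn2_swap[OF this] show ?thesis by simp
qed

lemma cn1_comp3: "cn3 h \<Longrightarrow> cn1 f \<Longrightarrow> cn1 g \<Longrightarrow> cn1 k \<Longrightarrow> cn1 (\<lambda>x. h (f x) (g x) (k x))"
  unfolding cn1_def[of "\<lambda>x. h (f x) (g x) (k x)"] using cn_comp3[of h 1 "\<lambda>xs. f (hd xs)" "\<lambda>xs. g (hd xs)" "\<lambda>xs. k (hd xs)"] cn1_def by auto

lemma cn1_add: "cn1 f \<Longrightarrow> cn1 g \<Longrightarrow> cn1 (\<lambda>x. f x + g x)" by (rule cn1_comp2[OF cn2_add])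
lemma cn1_mult: "cn1 f \<Longrightarrow> cn1 g \<Longrightarrow> cn1 (\<lambda>x. f x * g x)" by (rule cn1_comp2[OF cn2_mult])
lemma cn1_minus: "cn1 f \<Longrightarrow> cn1 g \<Longrightarrow> cn1 (\<lambda>x. f x - g x)" by (rule cn1_comp2[OF cn2_minus])
lemma cn1_if: "cn1 c \<Longrightarrow> cn1 f \<Longrightarrow> cn1 g \<Longrightarrow> cn1 (\<lambda>x. if c x = 0 then f x else g x)"
  by (rule cn1_comp3[OF cn3_if])

lemma cn1_Suc: "cn1 Suc" unfolding cn1_def by (rule cn_succ)

lemma cn1_mod: "cn1 (\<lambda>x. x mod M)"
proof -
  have a: "cn 2 (\<lambda>xs. Suc (xs!0))" by (rule cn_comp1[OF cn1_Suc]) (rule cn_proj, simp)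
  have b: "cn 2 (\<lambda>xs. M)" by (rule cn_const)
  have c: "cn 2 (\<lambda>xs. (Suc (xs!0) - M) + (M - Suc (xs!0)))"
    by (rule cn_comp2[OF cn2_add]; rule cn_comp2[OF cn2_minus]) (fact a b)+
  have "cn2 (\<lambda>r y. if ((Suc r - M) + (M - Suc r)) = 0 then 0 else Suc r)"
    by (rule cn2_I, rule cn_comp3[OF cn3_if c cn_const a])
  from prim1[OF this] have "cn1 (\<lambda>x. rec_nat 0 (\<lambda>y r. if ((Suc r - M) + (M - Suc r)) = 0 then 0 else Suc r) x)" .
  moreover have "rec_nat 0 (\<lambda>y r. if ((Suc r - M) + (M - Suc r)) = 0 then 0 else Suc r) x = x mod M" for x
    by (induction x) (auto simp: mod_Suc)
  ultimately show ?thesis by simp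
qed

lemma cn1_tri: "cn1 triangle"
proof -
  have "cn2 (\<lambda>r y. r + Suc y)"
    by (rule cn2_I, rule cn_comp2[OF cn2_add], rule cn_proj, simp, rule cn_comp1[OF cn1_Suc], rule cn_proj, simp)
  from prim1[OF this] have "cn1 (\<lambda>x. rec_nat 0 (\<lambda>y r. r + Suc y) x)" .
  moreover have "rec_nat 0 (\<lambda>y r. r + Suc y) x = triangle x" for x by (induction x) auto
  ultimately show ?thesis by simp
qed

definition fd :: "nat \<Rightarrow> nat" where
  "fd m = m - triangle (LEAST j. Suc m - triangle (Suc j) = 0)"

lemma triangle_mono: "i \<le> j \<Longrightarrow> triangle i \<le> triangle j"
  by (induction j) (auto simp: le_Suc_eq)

lemma triangle_ge: "n \<le> triangle n"
  by (induction n) auto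

lemma cn1_fd: "cn1 fd"
proof -
  have f: "cn (Suc 1) (\<lambda>xs. Suc (xs!1) - triangle (Suc (xs!0)))"
    by (rule cn_comp2[OF cn2_minus], rule cn_comp1[OF cn1_Suc], rule cn_proj, simp,
        rule cn_comp1[OF cn1_tri], rule cn_comp1[OF cn1_Suc], rule cn_proj, simp)
  have "cn 1 (\<lambda>xs. LEAST y. Suc ((y # xs)!1) - triangle (Suc ((y # xs)!0)) = 0)"
  proof (rule cn_mu[OF f], intro allI impI)
    fix xs :: "nat list" assume "length xs = 1"
    show "\<exists>y. Suc ((y # xs) ! 1) - triangle (Suc ((y # xs) ! 0)) = 0"
      by (rule exI[of _ "xs!0"]) (simp add: triangle_ge)
  qed
  then have "cn 1 (\<lambda>xs. LEAST y. Suc (hd xs) - triangle (Suc y) = 0)"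
    by (rule cn_cong) (auto simp: length_Suc_conv)
  then have "cn1 (\<lambda>x. LEAST y. Suc x - triangle (Suc y) = 0)" unfolding cn1_def .
  from cn1_minus[OF cn1_id cn1_comp[OF cn1_tri this]] show ?thesis
    unfolding fd_def[abs_def] .
qed

lemma fd_enc: "fd (prod_encode (x, y)) = x"
proof -
  let ?m = "prod_encode (x, y)"
  have m: "?m = triangle (x + y) + x" by (simp add: prod_encode_def)
  have "(LEAST j. Suc ?m - triangle (Suc j) = 0) = x + y"
  proof (rule Least_equality)
    show "Suc ?m - triangle (Suc (x + y)) = 0" using m by simp
  next
    fix j assume "Suc ?m - triangle (Suc j) = 0"
    then have "Suc ?m \<le> triangle (Suc j)" by simp
    show "x + y \<le> j"
    proof (rule ccontr)
      assume "\<not> x + y \<le> j"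
      then have "triangle (Suc j) \<le> triangle (x + y)" by (intro triangle_mono) simp
      with \<open>Suc ?m \<le> triangle (Suc j)\<close> m show False by simp
    qed
  qed
  then show ?thesis unfolding fd_def using m by simp
qed

lemma enc_sit_append: "enc_sit (w @ t) = enc_sit w + 2 ^ length w * enc_sit t"
  by (induction w) (auto simp: algebra_simps)

lemma enc_sit_bounds: "2 ^ length s \<le> enc_sit s + 1 \<and> enc_sit s + 2 \<le> 2 ^ (Suc (length s))"
  by (induction s) auto

lemma enc_sit_inj: "enc_sit s = enc_sit t \<Longrightarrow> s = t"
proof (induction s arbitrary: t)
  case Nil then show ?case by (cases t) (auto split: if_splits)
next
  case (Cons a s)
  then show ?case
  proof (cases t)
    case Nil then show ?thesis using Cons by (auto split: if_splits)
  next
    case (Cons b t')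
    with Cons.prems have "2 * enc_sit s + (if a then 2 else 1) = 2 * enc_sit t' + (if b then 2 else 1)" by simp
    then have "a = b" "enc_sit s = enc_sit t'" by (auto split: if_splits) presburger+
    with Cons Cons.IH show ?thesis by auto
  qed
qed

definition ext :: "bool list \<Rightarrow> bool list \<Rightarrow> bool" where
  "ext w s \<longleftrightarrow> (\<exists>t. s = w @ t)"

lemma mod_eq_bounds:
  fixes X Y M :: nat
  assumes "X mod M = Y mod M" "M \<le> X + 1" "X + 2 \<le> 2 * M" "M \<le> Y + 1" "Y + 2 \<le> 2 * M"
  shows "X = Y"
proof -
  have hx: "X mod M = (if X < M then X else X - M)"
  proof (cases "X < M")
    case False
    then have "X mod M = (X - M) mod M" by (simp add: le_mod_geq)
    also have "\<dots> = X - M" using assms False by (intro mod_less) linarith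
    finally show ?thesis using False by simp
  qed simp
  have hy: "Y mod M = (if Y < M then Y else Y - M)"
  proof (cases "Y < M")
    case False
    then have "Y mod M = (Y - M) mod M" by (simp add: le_mod_geq)
    also have "\<dots> = Y - M" using assms False by (intro mod_less) linarith
    finally show ?thesis using False by simp
  qed simp
  have "(if X < M then X else X - M) = (if Y < M then Y else Y - M)" using hx hy assms(1) by simp
  then show ?thesis using assms(2-5) by (cases "X < M"; cases "Y < M"; simp; linarith)
qed

lemma ext_test: "ext w s \<longleftrightarrow> (enc_sit w \<le> enc_sit s \<and> (enc_sit s - enc_sit w) mod 2 ^ length w = 0)"
proof
  assume "ext w s"
  then obtain t where "s = w @ t" unfolding ext_def by auto
  then show "enc_sit w \<le> enc_sit s \<and> (enc_sit s - enc_sit w) mod 2 ^ length w = 0"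
    by (simp add: enc_sit_append)
next
  assume a: "enc_sit w \<le> enc_sit s \<and> (enc_sit s - enc_sit w) mod 2 ^ length w = 0"
  let ?N = "length w"
  show "ext w s"
  proof (cases "?N \<le> length s")
    case False
    then have "(2::nat) ^ Suc (length s) \<le> 2 ^ ?N" by (intro power_increasing) auto
    moreover have "2 ^ ?N \<le> enc_sit w + 1" using enc_sit_bounds[of w] by blast
    moreover have "enc_sit s + 2 \<le> 2 ^ Suc (length s)" using enc_sit_bounds[of s] by blast
    ultimately have False using a by linarith
    then show ?thesis ..
  next
    case True
    define u where "u = take ?N s"
    define t where "t = drop ?N s"
    have s: "s = u @ t" unfolding u_def t_def by simp
    have lu: "length u = ?N" unfolding u_def using True by simp
    have es: "enc_sit s = enc_sit u + 2 ^ ?N * enc_sit t" using enc_sit_append[of u t] s lu by simp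
    have "2 ^ ?N dvd (enc_sit s - enc_sit w)" using a by (simp add: dvd_eq_mod_eq_0)
    then obtain k where k: "enc_sit s - enc_sit w = 2 ^ ?N * k" by (elim dvdE)
    have "enc_sit u + 2 ^ ?N * enc_sit t = enc_sit w + 2 ^ ?N * k" using a es k by linarith
    then have "(enc_sit u + 2 ^ ?N * enc_sit t) mod 2 ^ ?N = (enc_sit w + 2 ^ ?N * k) mod 2 ^ ?N" by simp
    then have "enc_sit u mod 2 ^ ?N = enc_sit w mod 2 ^ ?N" by simp
    moreover have "2 ^ ?N \<le> enc_sit u + 1" "enc_sit u + 2 \<le> 2 * 2 ^ ?N"
      using enc_sit_bounds[of u, unfolded lu power_Suc] by blast+
    moreover have "2 ^ ?N \<le> enc_sit w + 1" "enc_sit w + 2 \<le> 2 * 2 ^ ?N"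
      using enc_sit_bounds[of w, unfolded power_Suc] by blast+
    ultimately have "enc_sit u = enc_sit w" by (rule mod_eq_bounds)
    then have "u = w" by (rule enc_sit_inj)
    then show ?thesis unfolding ext_def using s by auto
  qed
qed

definition tst :: "bool list \<Rightarrow> nat \<Rightarrow> nat" where
  "tst w x = (enc_sit w - x) + ((x - enc_sit w) mod 2 ^ length w)"

lemma tst_iff: "tst w (enc_sit s) = 0 \<longleftrightarrow> ext w s"
  unfolding tst_def ext_test by auto

lemma cn1_tst: "cn1 (tst w)"
  unfolding tst_def[abs_def]
  by (intro cn1_add cn1_minus cn1_const cn1_id cn1_comp[OF cn1_mod])




lemma rn_iff: "recursive_nat E f \<longleftrightarrow> (\<exists>h. cn1 h \<and> (\<forall>d. f d = h (E d)))"
proof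
  assume "recursive_nat E f"
  then obtain g where g: "recfn 1 g" "\<forall>d. f d = g [E d]" unfolding recursive_nat_def by auto
  have "cn 1 (\<lambda>xs. g [hd xs])"
    by (rule cn_cong[OF recfn_cn[OF g(1)]]) (auto simp: length_Suc_conv)
  then have "cn1 (\<lambda>x. g [x])" unfolding cn1_def by simp
  with g show "\<exists>h. cn1 h \<and> (\<forall>d. f d = h (E d))" by auto
next
  assume "\<exists>h. cn1 h \<and> (\<forall>d. f d = h (E d))"
  then obtain h where h: "cn1 h" "\<forall>d. f d = h (E d)" by auto
  then obtain g where "recfn 1 g" "\<forall>xs. length xs = 1 \<longrightarrow> g xs = h (hd xs)"
    unfolding cn1_def cn_def by auto
  with h show "recursive_nat E f" unfolding recursive_nat_def
    by (intro exI[of _ g]) auto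
qed

lemma rn_const: "recursive_nat E (\<lambda>_. c)"
  unfolding rn_iff by (intro exI[of _ "\<lambda>_. c"]) (simp add: cn1_const)

lemma rn_cond:
  assumes "recursive_nat E a" "recursive_nat E b" "cn1 sel"
    and "\<And>d. tst w (sel (E d)) = 0 \<longleftrightarrow> P d"
  shows "recursive_nat E (\<lambda>d. if P d then a d else b d)"
proof -
  obtain ha where ha: "cn1 ha" "\<forall>d. a d = ha (E d)" using assms(1) unfolding rn_iff by auto
  obtain hb where hb: "cn1 hb" "\<forall>d. b d = hb (E d)" using assms(2) unfolding rn_iff by auto
  have "cn1 (\<lambda>x. if tst w (sel x) = 0 then ha x else hb x)"
    by (rule cn1_if[OF cn1_comp[OF cn1_tst assms(3)] ha(1) hb(1)])
  moreover have "\<forall>d. (if P d then a d else b d) = (if tst w (sel (E d)) = 0 then ha (E d) else hb (E d))"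
    using assms(4) ha hb by auto
  ultimately show ?thesis unfolding rn_iff by blast
qed

lemma rn_affine:
  assumes "recursive_nat E c"
  shows "recursive_nat E (\<lambda>d. K * c d + c d + K)"
proof -
  obtain h where h: "cn1 h" "\<forall>d. c d = h (E d)" using assms unfolding rn_iff by auto
  have "cn1 (\<lambda>x. K * h x + h x + K)"
    by (intro cn1_add cn1_mult cn1_const h(1))
  with h show ?thesis unfolding rn_iff by (intro exI[of _ "\<lambda>x. K * h x + h x + K"]) auto
qed

lemma rr_mod:
  assumes "recursive_rat E q" "cn1 sel"
    and "\<And>d. tst w (sel (E d)) = 0 \<longleftrightarrow> P d"
  shows "recursive_rat E (\<lambda>d. if P d then q d / real (Suc K) else 1)"
proof -
  obtain a b c where abc: "recursive_nat E a" "recursive_nat E b" "recursive_nat E c"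
    "\<forall>d. q d = (real (a d) - real (b d)) / real (Suc (c d))"
    using assms(1) unfolding recursive_rat_def by auto
  define a' where "a' = (\<lambda>d. if P d then a d else 1)"
  define b' where "b' = (\<lambda>d. if P d then b d else 0)"
  define c' where "c' = (\<lambda>d. if P d then K * c d + c d + K else 0)"
  have "recursive_nat E a'" unfolding a'_def by (rule rn_cond[OF abc(1) rn_const assms(2,3)])
  moreover have "recursive_nat E b'" unfolding b'_def by (rule rn_cond[OF abc(2) rn_const assms(2,3)])
  moreover have "recursive_nat E c'" unfolding c'_def by (rule rn_cond[OF rn_affine[OF abc(3)] rn_const assms(2,3)])
  moreover have "\<forall>d. (if P d then q d / real (Suc K) else 1) = (real (a' d) - real (b' d)) / real (Suc (c' d))"
  proof
    fix d
    have "real (Suc (K * c d + c d + K)) = real (Suc (c d)) * real (Suc K)" by (simp add: algebra_simps)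
    then show "(if P d then q d / real (Suc K) else 1) = (real (a' d) - real (b' d)) / real (Suc (c' d))"
      unfolding a'_def b'_def c'_def using abc(4) by auto
  qed
  ultimately show ?thesis unfolding recursive_rat_def by blast
qed

lemma tst_nil: "tst [] 0 = 0" unfolding tst_def by simp

lemma rr_scale:
  assumes "recursive_rat E q"
  shows "recursive_rat E (\<lambda>d. q d / real (Suc K))"
  using rr_mod[OF assms cn1_const[of 0], of "[]" "\<lambda>_. True" K] tst_nil by simp

lemma lsc_mod:
  assumes "lower_semicomputable E0 F" "cn1 sel"
    and "\<And>d n. tst w (sel (enc_pair E0 id (d, n))) = 0 \<longleftrightarrow> P d"
  shows "lower_semicomputable E0 (\<lambda>d. if P d then F d / real (Suc K) else 1)"
proof -
  obtain q where q: "recursive_rat (enc_pair E0 id) q" "\<forall>d n. q (d, n) \<le> q (d, Suc n)"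
    "\<forall>d. (\<lambda>n. q (d, n)) \<longlonglongrightarrow> F d"
    using assms(1) unfolding lower_semicomputable_def by auto
  define q' where "q' = (\<lambda>dn. if P (fst dn) then q dn / real (Suc K) else 1)"
  have "recursive_rat (enc_pair E0 id) q'"
    unfolding q'_def by (rule rr_mod[OF q(1) assms(2), where w=w]) (use assms(3) in auto)
  moreover have "\<forall>d n. q' (d, n) \<le> q' (d, Suc n)"
    unfolding q'_def using q(2) by (auto intro: divide_right_mono)
  moreover have "\<forall>d. (\<lambda>n. q' (d, n)) \<longlonglongrightarrow> (if P d then F d / real (Suc K) else 1)"
    unfolding q'_def using q(3) by (auto intro: tendsto_divide)
  ultimately show ?thesis unfolding lower_semicomputable_def by blast
qed

lemma enc_pair_simp: "enc_pair e1 e2 (x, y) = prod_encode (e1 x, e2 y)"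
  unfolding enc_pair_def by simp




lemma Ex_r_alt: "Ex_r r f = f False + r * (f True - f False)"
  unfolding Ex_r_def by (simp add: algebra_simps)

lemma Ex_le_max: "p \<le> r \<Longrightarrow> r \<le> q \<Longrightarrow> Ex_r r f \<le> max (Ex_r p f) (Ex_r q f)"
proof -
  assume a: "p \<le> r" "r \<le> q"
  show ?thesis
  proof (cases "f False \<le> f True")
    case True
    then have "r * (f True - f False) \<le> q * (f True - f False)" using a by (intro mult_right_mono) auto
    then show ?thesis unfolding Ex_r_alt by auto
  next
    case False
    then have "r * (f True - f False) \<le> p * (f True - f False)" using a by (intro mult_right_mono_neg) auto
    then show ?thesis unfolding Ex_r_alt by auto
  qed
qed

lemma Eup_bdd: "bdd_above ((\<lambda>r. Ex_r r f) ` {p..q})"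
  by (rule bdd_aboveI[of _ "max (Ex_r p f) (Ex_r q f)"]) (auto intro: Ex_le_max)

lemma Eup_le0:
  assumes "p \<le> q" "Ex_r p f \<le> 0" "Ex_r q f \<le> 0"
  shows "Eup (p, q) f \<le> 0"
  unfolding Eup_def
proof (rule cSup_least)
  show "(\<lambda>r. Ex_r r f) ` {fst (p, q)..snd (p, q)} \<noteq> {}" using assms(1) by simp
next
  fix y assume "y \<in> (\<lambda>r. Ex_r r f) ` {fst (p, q)..snd (p, q)}"
  then obtain r where r: "p \<le> r" "r \<le> q" "y = Ex_r r f" by auto
  have "Ex_r r f \<le> max (Ex_r p f) (Ex_r q f)" by (rule Ex_le_max[OF r(1,2)])
  with assms r(3) show "y \<le> 0" by linarith
qed

lemma Eup_point: "Eup (r, r) f = Ex_r r f"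
  unfolding Eup_def by simp

lemma Ex_le_Eup: "p \<le> r \<Longrightarrow> r \<le> q \<Longrightarrow> Ex_r r f \<le> Eup (p, q) f"
  unfolding Eup_def by (rule cSup_upper[OF _ Eup_bdd]) auto

lemma super_incl:
  assumes "p \<le> q" "supermartingale (\<lambda>_. (p, q)) T"
  shows "supermartingale (phi_pq \<pi> p q) T"
  unfolding supermartingale_def
proof
  fix s
  have h: "Eup (p, q) (dproc T s) \<le> 0" using assms(2) unfolding supermartingale_def by auto
  have "Ex_r p (dproc T s) \<le> Eup (p, q) (dproc T s)" by (rule Ex_le_Eup) (use assms(1) in auto)
  moreover have "Ex_r q (dproc T s) \<le> Eup (p, q) (dproc T s)" by (rule Ex_le_Eup) (use assms(1) in auto)
  ultimately show "Eup (phi_pq \<pi> p q s) (dproc T s) \<le> 0"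
    unfolding phi_pq_def using h by (simp add: Eup_point)
qed

lemma Tbar_incl: "p \<le> q \<Longrightarrow> Tbar R (\<lambda>_. (p, q)) \<subseteq> Tbar R (phi_pq \<pi> p q)"
  unfolding Tbar_def using super_incl by blast

section \<open>Extension predicate\<close>

lemma ext_snoc: "ext w s \<Longrightarrow> ext w (s @ [x])"
  unfolding ext_def by auto

lemma ext_len: "ext w s \<Longrightarrow> length w \<le> length s"
  unfolding ext_def by auto

lemma ext_nil: "w \<noteq> [] \<Longrightarrow> \<not> ext w []"
  unfolding ext_def by auto

lemma ext_snoc_new: "\<not> ext w s \<Longrightarrow> ext w (s @ [x]) \<Longrightarrow> s @ [x] = w"
  unfolding ext_def
proof -
  assume a: "\<not> (\<exists>t. s = w @ t)" "\<exists>t. s @ [x] = w @ t"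
  then obtain t where t: "s @ [x] = w @ t" by auto
  show "s @ [x] = w"
  proof (cases t rule: rev_cases)
    case Nil then show ?thesis using t by simp
  next
    case (snoc t' y)
    then have "s = w @ t'" using t by simp
    with a show ?thesis by auto
  qed
qed

lemma ext_self: "ext w w" unfolding ext_def by auto

lemma length_prefix[simp]: "length (prefix \<omega> n) = n"
  unfolding prefix_def by simp

lemma ext_prefix: "N \<le> n \<Longrightarrow> ext (prefix \<omega> N) (prefix \<omega> n)"
proof -
  assume "N \<le> n"
  then obtain k where "n = N + k" using le_Suc_ex by blast
  then have "prefix \<omega> n = prefix \<omega> N @ map \<omega> [N..<N+k]"
    unfolding prefix_def using upt_add_eq_append[of 0 N k] by simp
  then show ?thesis unfolding ext_def by auto
qed

section \<open>The modified test\<close>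

definition Tm :: "bool list \<Rightarrow> real \<Rightarrow> (bool list \<Rightarrow> real) \<Rightarrow> bool list \<Rightarrow> real" where
  "Tm w c T s = (if ext w s then T s / c else 1)"

lemma Ex_r_div: "Ex_r r (\<lambda>x. f x / c) = Ex_r r f / c"
  unfolding Ex_r_def by (simp only: times_divide_eq_right add_divide_distrib)

lemma Ex_r_nonpos: "0 \<le> r \<Longrightarrow> r \<le> 1 \<Longrightarrow> f True \<le> 0 \<Longrightarrow> f False \<le> 0 \<Longrightarrow> Ex_r r f \<le> 0"
proof -
  assume a: "0 \<le> r" "r \<le> 1" "f True \<le> 0" "f False \<le> 0"
  have "r * f True \<le> 0" using a by (intro mult_nonneg_nonpos) auto
  moreover have "(1 - r) * f False \<le> 0" using a by (intro mult_nonneg_nonpos) auto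
  ultimately show ?thesis unfolding Ex_r_def by linarith
qed

lemma Tm_super:
  assumes "0 \<le> p" "p \<le> q" "q \<le> 1" "c > 0" "T w \<le> c"
    and N: "\<And>t. length w \<le> length t \<Longrightarrow> Ex_r p (dproc T t) \<le> 0 \<and> Ex_r q (dproc T t) \<le> 0"
  shows "supermartingale (\<lambda>_. (p, q)) (Tm w c T)"
  unfolding supermartingale_def
proof
  fix s
  show "Eup (p, q) (dproc (Tm w c T) s) \<le> 0"
  proof (cases "ext w s")
    case True
    then have d: "dproc (Tm w c T) s = (\<lambda>x. dproc T s x / c)"
      unfolding dproc_def Tm_def using ext_snoc[OF True] by (auto simp: diff_divide_distrib)
    have "length w \<le> length s" using True by (rule ext_len)
    from N[OF this] show ?thesis unfolding d using assms(2,4)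
      by (intro Eup_le0) (auto simp: Ex_r_div divide_nonpos_pos)
  next
    case False
    have le: "dproc (Tm w c T) s x \<le> 0" for x
    proof (cases "ext w (s @ [x])")
      case True
      then have "s @ [x] = w" using ext_snoc_new False by blast
      then show ?thesis unfolding dproc_def Tm_def using False True assms(4,5) by auto
    next
      case False2: False
      then show ?thesis unfolding dproc_def Tm_def using False by auto
    qed
    show ?thesis using assms(1-3) le by (intro Eup_le0 Ex_r_nonpos) auto
  qed
qed

lemma Tm_test:
  assumes "\<And>s. T s \<ge> 0" "c > 0" "w \<noteq> []"
  shows "test_process (Tm w c T)"
  unfolding test_process_def Tm_def using assms ext_nil by auto

lemma Tm_prefix: "N \<le> n \<Longrightarrow> Tm (prefix \<omega> N) c T (prefix \<omega> n) = T (prefix \<omega> n) / c"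
  unfolding Tm_def using ext_prefix by auto

lemma generated_snoc: "generated D (s @ [x]) = generated D s * D s x"
proof -
  have "generated D (s @ [x]) = (\<Prod>k<Suc (length s). D (take k (s @ [x])) ((s @ [x]) ! k))"
    unfolding generated_def by simp
  also have "\<dots> = (\<Prod>k<length s. D (take k (s @ [x])) ((s @ [x]) ! k)) * D s x"
    by (simp add: nth_append)
  also have "(\<Prod>k<length s. D (take k (s @ [x])) ((s @ [x]) ! k)) = generated D s"
    unfolding generated_def by (rule prod.cong) (auto simp: nth_append)
  finally show ?thesis .
qed

lemma generated_nil: "generated D [] = 1" unfolding generated_def by simp

lemma generated_nonneg: "(\<And>s x. D s x \<ge> 0) \<Longrightarrow> generated D s \<ge> 0"
  unfolding generated_def by (auto intro: prod_nonneg)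

lemma generated_Tm:
  assumes "w \<noteq> []" "generated D w > 0"
  shows "generated (\<lambda>u x. if ext w u then D u x else 1) s = Tm w (generated D w) (generated D) s"
proof (induction s rule: rev_induct)
  case Nil then show ?case using assms ext_nil unfolding Tm_def by (simp add: generated_nil)
next
  case (snoc x s)
  show ?case
  proof (cases "ext w s")
    case True
    then show ?thesis using snoc ext_snoc[OF True] unfolding Tm_def by (simp add: generated_snoc)
  next
    case False
    show ?thesis
    proof (cases "ext w (s @ [x])")
      case True
      then have w: "s @ [x] = w" using ext_snoc_new False by blast
      have ih: "generated (\<lambda>u x. if ext w u then D u x else 1) s = 1"
        using snoc.IH False unfolding Tm_def by simp
      have l: "generated (\<lambda>u x. if ext w u then D u x else 1) (s @ [x]) = 1"
        unfolding generated_snoc ih using False by simp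
      have r: "Tm w (generated D w) (generated D) (s @ [x]) = 1"
        unfolding Tm_def using True w assms by simp
      show ?thesis using l r by simp
    next
      case False2: False
      then show ?thesis using snoc False unfolding Tm_def by (simp add: generated_snoc)
    qed
  qed
qed




lemma count_eq: "(\<Sum>k<(n::nat). of_bool (A k) :: real) = real (card {k. k < n \<and> A k})"
proof -
  have "(\<Sum>k<n. of_bool (A k) :: real) = real (card ({..<n} \<inter> {k. A k}))"
    by (rule sum_of_bool_eq) simp_all
  also have "{..<n} \<inter> {k. A k} = {k. k < n \<and> A k}" by auto
  finally show ?thesis .
qed

lemma count_tendsto:
  fixes A :: "nat \<Rightarrow> bool"
  assumes "infinite {k. A k}"
  shows "filterlim (\<lambda>n. \<Sum>k<n. of_bool (A k) :: real) at_top sequentially"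
  unfolding filterlim_at_top
proof
  fix Z :: real
  obtain B where B: "finite B" "card B = nat \<lceil>Z\<rceil>" "B \<subseteq> {k. A k}"
    using infinite_arbitrarily_large[OF assms] by blast
  obtain n0 where n0: "B \<subseteq> {..<n0}" using finite_nat_bounded[OF B(1)] by blast
  have "Z \<le> (\<Sum>k<n. of_bool (A k))" if "n0 \<le> n" for n
  proof -
    have "B \<subseteq> {k. k < n \<and> A k}" using n0 B(3) that by auto
    then have "card B \<le> card {k. k < n \<and> A k}" by (intro card_mono) auto
    then have "real (nat \<lceil>Z\<rceil>) \<le> real (card {k. k < n \<and> A k})" using B(2) by simp
    then show ?thesis unfolding count_eq by linarith
  qed
  then show "eventually (\<lambda>n. Z \<le> (\<Sum>k<n. of_bool (A k))) sequentially"
    unfolding eventually_sequentially by blast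
qed

lemma ratio_tendsto:
  fixes A :: "nat \<Rightarrow> bool"
  assumes "filterlim (\<lambda>n. \<Sum>k<n. of_bool (A k) :: real) at_top sequentially"
    and "\<And>k. A k \<Longrightarrow> g k = v"
  shows "(\<lambda>n. ereal ((\<Sum>k<n. of_bool (A k) * g k) / (\<Sum>k<n. of_bool (A k)))) \<longlonglongrightarrow> ereal v"
proof -
  have ev: "eventually (\<lambda>n. 1 \<le> (\<Sum>k<n. of_bool (A k) :: real)) sequentially"
    using assms(1) unfolding filterlim_at_top by blast
  have num: "(\<Sum>k<n. of_bool (A k) * g k) = v * (\<Sum>k<n. of_bool (A k))" for n
    unfolding sum_distrib_left by (rule sum.cong) (auto simp: assms(2))
  have x: "v * x / x = v" if "1 \<le> x" for x :: real using that by simp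
  have "eventually (\<lambda>n. ereal v = ereal ((\<Sum>k<n. of_bool (A k) * g k) / (\<Sum>k<n. of_bool (A k)))) sequentially"
    using ev by eventually_elim (simp only: num x)
  then show ?thesis by (rule Lim_transform_eventually[OF tendsto_const])
qed

lemma sel_finite_p:
  assumes "Sel \<in> \<SS>" "sel_random \<SS> (\<lambda>_. I) \<pi>" "snd I < 1"
    and "\<And>k. Sel (prefix \<pi> k) \<Longrightarrow> \<pi> k"
  shows "finite {k. Sel (prefix \<pi> k)}"
proof (rule ccontr)
  assume inf: "infinite {k. Sel (prefix \<pi> k)}"
  let ?A = "\<lambda>k. Sel (prefix \<pi> k)"
  have lim: "filterlim (\<lambda>n. \<Sum>k<n. of_bool (?A k) :: real) at_top sequentially"
    by (rule count_tendsto[OF inf])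
  have "(\<lambda>n. ereal ((\<Sum>k<n. of_bool (?A k) * (of_bool (\<pi> k) - snd I)) / (\<Sum>k<n. of_bool (?A k))))
      \<longlonglongrightarrow> ereal (1 - snd I)"
    by (rule ratio_tendsto[OF lim]) (simp add: assms(4))
  then have "limsup (\<lambda>n. ereal ((\<Sum>k<n. of_bool (?A k) * (of_bool (\<pi> k) - snd I)) / (\<Sum>k<n. of_bool (?A k))))
      = ereal (1 - snd I)"
    by (intro lim_imp_Limsup) simp_all
  moreover have "limsup (\<lambda>n. ereal ((\<Sum>k<n. of_bool (?A k) * (of_bool (\<pi> k) - snd I)) / (\<Sum>k<n. of_bool (?A k)))) \<le> 0"
    using assms(1,2) lim unfolding sel_random_def by auto
  ultimately show False using assms(3) by simp
qed

lemma sel_finite_q: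
  assumes "Sel \<in> \<SS>" "sel_random \<SS> (\<lambda>_. I) \<pi>" "0 < fst I"
    and "\<And>k. Sel (prefix \<pi> k) \<Longrightarrow> \<not> \<pi> k"
  shows "finite {k. Sel (prefix \<pi> k)}"
proof (rule ccontr)
  assume inf: "infinite {k. Sel (prefix \<pi> k)}"
  let ?A = "\<lambda>k. Sel (prefix \<pi> k)"
  have lim: "filterlim (\<lambda>n. \<Sum>k<n. of_bool (?A k) :: real) at_top sequentially"
    by (rule count_tendsto[OF inf])
  have "(\<lambda>n. ereal ((\<Sum>k<n. of_bool (?A k) * (of_bool (\<pi> k) - fst I)) / (\<Sum>k<n. of_bool (?A k))))
      \<longlonglongrightarrow> ereal (- fst I)"
    by (rule ratio_tendsto[OF lim]) (simp add: assms(4))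
  then have "liminf (\<lambda>n. ereal ((\<Sum>k<n. of_bool (?A k) * (of_bool (\<pi> k) - fst I)) / (\<Sum>k<n. of_bool (?A k))))
      = ereal (- fst I)"
    by (intro lim_imp_Liminf) simp_all
  moreover have "liminf (\<lambda>n. ereal ((\<Sum>k<n. of_bool (?A k) * (of_bool (\<pi> k) - fst I)) / (\<Sum>k<n. of_bool (?A k)))) \<ge> 0"
    using assms(1,2) lim unfolding sel_random_def by auto
  ultimately show False using assms(3) by simp
qed

lemma bound_N:
  assumes "sel_temporal p T \<in> \<SS>" "sel_temporal q T \<in> \<SS>" "sel_random \<SS> (\<lambda>_. I) \<pi>"
    and "0 < fst I" "snd I < 1" "supermartingale (phi_pq \<pi> p q) T"
  shows "\<exists>N. \<forall>t. N \<le> length t \<longrightarrow> Ex_r p (dproc T t) \<le> 0 \<and> Ex_r q (dproc T t) \<le> 0"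
proof -
  have sup: "Eup (phi_pq \<pi> p q t) (dproc T t) \<le> 0" for t
    using assms(6) unfolding supermartingale_def by auto
  have sp: "sel_temporal r T (prefix \<pi> k) \<longleftrightarrow> (\<exists>t. length t = k \<and> Ex_r r (dproc T t) > 0)" for r k
    unfolding sel_temporal_def by simp
  have fp: "finite {k. sel_temporal p T (prefix \<pi> k)}"
  proof (rule sel_finite_p[OF assms(1,3,5)])
    fix k assume "sel_temporal p T (prefix \<pi> k)"
    then obtain t where t: "length t = k" "Ex_r p (dproc T t) > 0" unfolding sp by auto
    show "\<pi> k"
    proof (rule ccontr)
      assume "\<not> \<pi> k"
      then have "phi_pq \<pi> p q t = (p, p)" unfolding phi_pq_def using t by simp
      with sup[of t] t show False by (simp add: Eup_point)
    qed
  qed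
  have fq: "finite {k. sel_temporal q T (prefix \<pi> k)}"
  proof (rule sel_finite_q[OF assms(2,3,4)])
    fix k assume "sel_temporal q T (prefix \<pi> k)"
    then obtain t where t: "length t = k" "Ex_r q (dproc T t) > 0" unfolding sp by auto
    show "\<not> \<pi> k"
    proof
      assume "\<pi> k"
      then have "phi_pq \<pi> p q t = (q, q)" unfolding phi_pq_def using t by simp
      with sup[of t] t show False by (simp add: Eup_point)
    qed
  qed
  obtain N1 where N1: "{k. sel_temporal p T (prefix \<pi> k)} \<subseteq> {..<N1}" using finite_nat_bounded[OF fp] by blast
  obtain N2 where N2: "{k. sel_temporal q T (prefix \<pi> k)} \<subseteq> {..<N2}" using finite_nat_bounded[OF fq] by blast
  show ?thesis
  proof (intro exI[of _ "max N1 N2"] allI impI)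
    fix t :: "bool list" assume "max N1 N2 \<le> length t"
    then have "\<not> sel_temporal p T (prefix \<pi> (length t))" "\<not> sel_temporal q T (prefix \<pi> (length t))"
      using N1 N2 by auto
    then show "Ex_r p (dproc T t) \<le> 0 \<and> Ex_r q (dproc T t) \<le> 0" unfolding sp by (auto simp: not_less)
  qed
qed

lemma limsup_scale:
  assumes "c > 0" "eventually (\<lambda>n. g n = f n / c) sequentially"
  shows "limsup (\<lambda>n. ereal (g n)) = ereal (1 / c) * limsup (\<lambda>n. ereal (f n))"
proof -
  have "eventually (\<lambda>n. ereal (g n) = ereal (1 / c) * ereal (f n)) sequentially"
    using assms(2) by eventually_elim simp
  then have "limsup (\<lambda>n. ereal (g n)) = limsup (\<lambda>n. ereal (1 / c) * ereal (f n))"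
    by (rule Limsup_eq)
  also have "\<dots> = ereal (1 / c) * limsup (\<lambda>n. ereal (f n))"
    using assms(1) by (intro limsup_ereal_mult_left) simp
  finally show ?thesis .
qed

lemma limsup_scale_inf:
  assumes "c > 0" "eventually (\<lambda>n. g n = f n / c) sequentially" "limsup (\<lambda>n. ereal (f n)) = \<infinity>"
  shows "limsup (\<lambda>n. ereal (g n)) = \<infinity>"
  using limsup_scale[OF assms(1,2)] assms(1,3) by simp

lemma limsup_scale_nonneg:
  assumes "c > 0" "eventually (\<lambda>n. g n = f n / c) sequentially" "limsup (\<lambda>n. ereal (f n)) \<ge> 0"
  shows "limsup (\<lambda>n. ereal (g n)) \<ge> 0"
  using limsup_scale[OF assms(1,2)] assms(1,3) by (simp add: ereal_zero_le_0_iff)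

lemma limsup_inf_pos:
  assumes "limsup (\<lambda>n. ereal (f n)) = \<infinity>"
  shows "\<exists>n\<ge>M. f n > 0"
proof (rule ccontr)
  assume "\<not> (\<exists>n\<ge>M. f n > 0)"
  then have "eventually (\<lambda>n. ereal (f n) \<le> 0) sequentially"
    unfolding eventually_sequentially by (auto simp: not_less)
  then have "limsup (\<lambda>n. ereal (f n)) \<le> 0" by (rule Limsup_bounded)
  with assms show False by simp
qed




lemma cn1_fdfd: "cn1 (\<lambda>m. fd (fd m))" by (rule cn1_comp[OF cn1_fd cn1_fd])

lemma construct:
  assumes T: "T \<in> Fset R" and pq: "0 \<le> p" "p \<le> q" "q \<le> 1"
    and N: "\<forall>t. N \<le> length t \<longrightarrow> Ex_r p (dproc T t) \<le> 0 \<and> Ex_r q (dproc T t) \<le> 0"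
    and pos: "\<forall>M. \<exists>n\<ge>M. T (prefix \<omega> n) > 0"
  shows "\<exists>T' c. T' \<in> Tbar R (\<lambda>_. (p, q)) \<and> c > 0 \<and> (\<exists>N'. \<forall>n\<ge>N'. T' (prefix \<omega> n) = T (prefix \<omega> n) / c)
     \<and> (R \<noteq> R_wML \<longrightarrow> (\<exists>K. c = real (Suc K)))"
proof (cases "R = R_wML")
  case False
  define w where "w = prefix \<omega> (Suc N)"
  define K where "K = nat \<lceil>T w\<rceil>"
  define c where "c = real (Suc K)"
  have wne: "w \<noteq> []" unfolding w_def by (metis length_prefix list.size(3) nat.distinct(1))
  have c0: "c > 0" unfolding c_def by simp
  have Tw: "T w \<le> c" unfolding c_def K_def by linarith
  have Nw: "\<And>t. length w \<le> length t \<Longrightarrow> Ex_r p (dproc T t) \<le> 0 \<and> Ex_r q (dproc T t) \<le> 0"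
    using N unfolding w_def by auto
  have sup: "supermartingale (\<lambda>_. (p, q)) (Tm w c T)"
    by (rule Tm_super[OF pq c0 Tw Nw])
  have ev: "\<forall>n\<ge>Suc N. Tm w c T (prefix \<omega> n) = T (prefix \<omega> n) / c"
    unfolding w_def using Tm_prefix by blast
  have Tm_eq: "Tm w c T = (\<lambda>d. if ext w d then T d / real (Suc K) else 1)"
    unfolding Tm_def[abs_def] c_def by simp
  have "Tm w c T \<in> Fset R"
  proof (cases R)
    case R_ML
    then have tp: "test_process T" and lsc: "lower_semicomputable enc_sit T"
      using T by (auto simp: F_ML_def)
    have "test_process (Tm w c T)"
      by (rule Tm_test[OF _ c0 wne]) (use tp in \<open>auto simp: test_process_def\<close>)
    moreover have "lower_semicomputable enc_sit (Tm w c T)"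
      unfolding Tm_eq
      by (rule lsc_mod[OF lsc cn1_fd, where w=w]) (simp add: enc_pair_simp fd_enc tst_iff)
    ultimately show ?thesis using R_ML by (simp add: F_ML_def)
  next
    case R_wML then show ?thesis using False by simp
  next
    case R_C
    then have tp: "test_process T" and tpos: "\<forall>s. T s > 0" and rr: "recursive_rat enc_sit T"
      using T by (auto simp: F_C_def)
    have "test_process (Tm w c T)"
      by (rule Tm_test[OF _ c0 wne]) (use tp in \<open>auto simp: test_process_def\<close>)
    moreover have "\<forall>s. Tm w c T s > 0" using tpos c0 unfolding Tm_def by auto
    moreover have "recursive_rat enc_sit (Tm w c T)"
      unfolding Tm_eq
      by (rule rr_mod[OF rr cn1_id, where w=w]) (simp add: tst_iff)
    ultimately show ?thesis using R_C by (simp add: F_C_def)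
  next
    case R_S
    then have tp: "test_process T" and tpos: "\<forall>s. T s > 0" and rr: "recursive_rat enc_sit T"
      using T by (auto simp: F_C_def)
    have "test_process (Tm w c T)"
      by (rule Tm_test[OF _ c0 wne]) (use tp in \<open>auto simp: test_process_def\<close>)
    moreover have "\<forall>s. Tm w c T s > 0" using tpos c0 unfolding Tm_def by auto
    moreover have "recursive_rat enc_sit (Tm w c T)"
      unfolding Tm_eq
      by (rule rr_mod[OF rr cn1_id, where w=w]) (simp add: tst_iff)
    ultimately show ?thesis using R_S by (simp add: F_C_def)
  qed
  then have "Tm w c T \<in> Tbar R (\<lambda>_. (p, q))" using sup unfolding Tbar_def by simp
  then show ?thesis using c0 ev c_def by blast
next
  case True
  then obtain D where D: "T = generated D" "\<forall>s x. D s x \<ge> 0"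
      "lower_semicomputable (enc_pair enc_sit enc_bool) (\<lambda>(s, x). D s x)"
    using T by (auto simp: F_wML_def)
  obtain n0 where n0: "n0 \<ge> Suc N" "T (prefix \<omega> n0) > 0" using pos by blast
  define w where "w = prefix \<omega> n0"
  define c where "c = T w"
  have wne: "w \<noteq> []" unfolding w_def using n0(1) by (metis length_prefix list.size(3) not_less_eq_eq le0)
  have c0: "c > 0" unfolding c_def w_def using n0 by simp
  have Tw: "T w \<le> c" unfolding c_def by simp
  have Nw: "\<And>t. length w \<le> length t \<Longrightarrow> Ex_r p (dproc T t) \<le> 0 \<and> Ex_r q (dproc T t) \<le> 0"
    using N n0(1) unfolding w_def by auto
  have sup: "supermartingale (\<lambda>_. (p, q)) (Tm w c T)"
    by (rule Tm_super[OF pq c0 Tw Nw])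
  have ev: "\<forall>n\<ge>n0. Tm w c T (prefix \<omega> n) = T (prefix \<omega> n) / c"
    unfolding w_def using Tm_prefix by blast
  define D' where "D' = (\<lambda>u x. if ext w u then D u x else 1)"
  have gen: "generated D' = Tm w c T"
    unfolding D'_def c_def D(1) using generated_Tm[OF wne] c0 unfolding c_def D(1) by auto
  have D'0: "\<forall>s x. D' s x \<ge> 0" unfolding D'_def using D(2) by auto
  have "lower_semicomputable (enc_pair enc_sit enc_bool)
      (\<lambda>d. if (case d of (u, x) \<Rightarrow> ext w u) then (case d of (s, x) \<Rightarrow> D s x) / real (Suc 0) else 1)"
    by (rule lsc_mod[OF D(3) cn1_fdfd, where w=w]) (auto simp: enc_pair_simp fd_enc tst_iff)
  moreover have "(\<lambda>d. if (case d of (u, x) \<Rightarrow> ext w u) then (case d of (s, x) \<Rightarrow> D s x) / real (Suc 0) else 1)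
      = (\<lambda>(s, x). D' s x)"
    unfolding D'_def by (auto simp: fun_eq_iff)
  ultimately have "lower_semicomputable (enc_pair enc_sit enc_bool) (\<lambda>(s, x). D' s x)" by simp
  note lscD' = this
  have "Tm w c T \<in> F_wML" unfolding F_wML_def
  proof (intro CollectI exI[of _ D'] conjI)
    show "Tm w c T = generated D'" using gen by simp
  qed (use D'0 lscD' in auto)
  then have "Tm w c T \<in> Tbar R (\<lambda>_. (p, q))" using sup True unfolding Tbar_def by simp
  then show ?thesis using c0 ev True by blast
qed

lemma growth_scale:
  assumes "growth_function \<tau>"
  shows "growth_function (\<lambda>n. \<tau> n / real (Suc K))"
proof -
  let ?c = "real (Suc K)"
  have c1: "?c \<ge> 1" by simp
  obtain q where q: "recursive_rat (enc_pair id id) q" "\<forall>d n. \<bar>\<tau> d - q (d, n)\<bar> < 1 / 2 ^ n"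
    using assms unfolding growth_function_def computable_real_def by auto
  have "recursive_rat (enc_pair id id) (\<lambda>d. q d / ?c)" by (rule rr_scale[OF q(1)])
  moreover have "\<forall>d n. \<bar>\<tau> d / ?c - q (d, n) / ?c\<bar> < 1 / 2 ^ n"
  proof (intro allI)
    fix d n
    have "\<bar>\<tau> d / ?c - q (d, n) / ?c\<bar> = \<bar>\<tau> d - q (d, n)\<bar> / ?c"
      by (simp add: diff_divide_distrib[symmetric])
    also have "\<dots> \<le> \<bar>\<tau> d - q (d, n)\<bar> / 1"
      using c1 by (intro divide_left_mono) auto
    also have "\<dots> = \<bar>\<tau> d - q (d, n)\<bar>" by simp
    also have "\<dots> < 1 / 2 ^ n" using q(2) by auto
    finally show "\<bar>\<tau> d / ?c - q (d, n) / ?c\<bar> < 1 / 2 ^ n" .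
  qed
  ultimately have "computable_real id (\<lambda>n. \<tau> n / ?c)" unfolding computable_real_def
    by (intro exI[of _ "\<lambda>d. q d / ?c"]) simp
  moreover have "mono (\<lambda>n. \<tau> n / ?c)"
    using assms unfolding growth_function_def mono_def by (auto intro: divide_right_mono)
  moreover have "\<forall>n. \<tau> n / ?c \<ge> 0" using assms unfolding growth_function_def by auto
  moreover have "\<not> bdd_above (range (\<lambda>n. \<tau> n / ?c))"
  proof
    assume "bdd_above (range (\<lambda>n. \<tau> n / ?c))"
    then obtain M where M: "\<And>n. \<tau> n / ?c \<le> M" by (auto simp: bdd_above_def)
    have "\<tau> n \<le> M * ?c" for n using M[of n] by (simp add: divide_le_eq)
    then have "bdd_above (range \<tau>)" by (auto simp: bdd_above_def)
    with assms show False unfolding growth_function_def by auto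
  qed
  ultimately show ?thesis unfolding growth_function_def by blast
qed




lemma ev_of: "\<forall>n\<ge>N'. g n = f n \<Longrightarrow> eventually (\<lambda>n. g n = f n) sequentially"
  unfolding eventually_sequentially by blast

theorem theorem29:
  fixes R :: rtype and p q :: real and I :: "real \<times> real"
    and \<SS> :: "(bool list \<Rightarrow> bool) set" and \<pi> \<omega> :: "nat \<Rightarrow> bool"
  assumes "0 \<le> p" and "p < q" and "q \<le> 1"
    and "0 < fst I" and "fst I \<le> snd I" and "snd I < 1"
    and "countable \<SS>"
    and "sel_pq p q (Fset R) \<subseteq> \<SS>"
    and "sel_random \<SS> (\<lambda>_. I) \<pi>"
  shows "random R (phi_pq \<pi> p q) \<omega> \<longleftrightarrow> random R (\<lambda>_. (p, q)) \<omega>"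
proof -
  have pq: "p \<le> q" using assms(2) by simp
  have incl: "Tbar R (\<lambda>_. (p, q)) \<subseteq> Tbar R (phi_pq \<pi> p q)" by (rule Tbar_incl[OF pq])
  have getN: "\<exists>N. \<forall>t. N \<le> length t \<longrightarrow> Ex_r p (dproc T t) \<le> 0 \<and> Ex_r q (dproc T t) \<le> 0"
    if T: "T \<in> Tbar R (phi_pq \<pi> p q)" for T
  proof -
    have TF: "T \<in> Fset R" and sm: "supermartingale (phi_pq \<pi> p q) T" using T unfolding Tbar_def by auto
    have "sel_temporal p T \<in> \<SS>" "sel_temporal q T \<in> \<SS>"
      using assms(8) TF unfolding sel_pq_def by blast+
    then show ?thesis using bound_N assms(4,6,9) sm by blast
  qed
  show ?thesis
  proof (cases "R = R_S")
    case False
    have "(\<exists>T\<in>Tbar R (phi_pq \<pi> p q). limsup (\<lambda>n. ereal (T (prefix \<omega> n))) = \<infinity>) \<longleftrightarrow>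
          (\<exists>T\<in>Tbar R (\<lambda>_. (p, q)). limsup (\<lambda>n. ereal (T (prefix \<omega> n))) = \<infinity>)"
    proof
      assume "\<exists>T\<in>Tbar R (phi_pq \<pi> p q). limsup (\<lambda>n. ereal (T (prefix \<omega> n))) = \<infinity>"
      then obtain T where T: "T \<in> Tbar R (phi_pq \<pi> p q)" and lim: "limsup (\<lambda>n. ereal (T (prefix \<omega> n))) = \<infinity>"
        by blast
      obtain N where N: "\<forall>t. N \<le> length t \<longrightarrow> Ex_r p (dproc T t) \<le> 0 \<and> Ex_r q (dproc T t) \<le> 0"
        using getN[OF T] by blast
      have pos: "\<forall>M. \<exists>n\<ge>M. T (prefix \<omega> n) > 0" using limsup_inf_pos[OF lim] by blast
      have TF: "T \<in> Fset R" using T unfolding Tbar_def by auto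
      obtain T' c N' where T': "T' \<in> Tbar R (\<lambda>_. (p, q))" "c > 0"
          "\<forall>n\<ge>N'. T' (prefix \<omega> n) = T (prefix \<omega> n) / c"
        using construct[OF TF assms(1) pq assms(3) N pos] by blast
      have "limsup (\<lambda>n. ereal (T' (prefix \<omega> n))) = \<infinity>"
        by (rule limsup_scale_inf[OF T'(2) ev_of[OF T'(3)] lim])
      with T'(1) show "\<exists>T\<in>Tbar R (\<lambda>_. (p, q)). limsup (\<lambda>n. ereal (T (prefix \<omega> n))) = \<infinity>" by blast
    next
      assume "\<exists>T\<in>Tbar R (\<lambda>_. (p, q)). limsup (\<lambda>n. ereal (T (prefix \<omega> n))) = \<infinity>"
      with incl show "\<exists>T\<in>Tbar R (phi_pq \<pi> p q). limsup (\<lambda>n. ereal (T (prefix \<omega> n))) = \<infinity>" by blast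
    qed
    then show ?thesis unfolding random_def using False by simp
  next
    case True
    have "(\<exists>T\<in>Tbar R_S (phi_pq \<pi> p q). \<exists>\<tau>. growth_function \<tau> \<and> limsup (\<lambda>n. ereal (T (prefix \<omega> n) - \<tau> n)) \<ge> 0) \<longleftrightarrow>
          (\<exists>T\<in>Tbar R_S (\<lambda>_. (p, q)). \<exists>\<tau>. growth_function \<tau> \<and> limsup (\<lambda>n. ereal (T (prefix \<omega> n) - \<tau> n)) \<ge> 0)"
    proof
      assume "\<exists>T\<in>Tbar R_S (phi_pq \<pi> p q). \<exists>\<tau>. growth_function \<tau> \<and> limsup (\<lambda>n. ereal (T (prefix \<omega> n) - \<tau> n)) \<ge> 0"
      then obtain T \<tau> where T: "T \<in> Tbar R (phi_pq \<pi> p q)" and g: "growth_function \<tau>"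
          and lim: "limsup (\<lambda>n. ereal (T (prefix \<omega> n) - \<tau> n)) \<ge> 0"
        using True by blast
      obtain N where N: "\<forall>t. N \<le> length t \<longrightarrow> Ex_r p (dproc T t) \<le> 0 \<and> Ex_r q (dproc T t) \<le> 0"
        using getN[OF T] by blast
      have TF: "T \<in> Fset R" using T unfolding Tbar_def by auto
      then have "\<forall>s. T s > 0" using True by (simp add: F_C_def)
      then have pos: "\<forall>M. \<exists>n\<ge>M. T (prefix \<omega> n) > 0" by blast
      obtain T' c N' K where T': "T' \<in> Tbar R (\<lambda>_. (p, q))" "c > 0"
          "\<forall>n\<ge>N'. T' (prefix \<omega> n) = T (prefix \<omega> n) / c" "c = real (Suc K)"
        using construct[OF TF assms(1) pq assms(3) N pos] True by blast
      have g': "growth_function (\<lambda>n. \<tau> n / c)" using growth_scale[OF g] T'(4) by simp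
      have "\<forall>n\<ge>N'. T' (prefix \<omega> n) - \<tau> n / c = (T (prefix \<omega> n) - \<tau> n) / c"
        using T'(3) by (simp add: diff_divide_distrib)
      then have "limsup (\<lambda>n. ereal (T' (prefix \<omega> n) - \<tau> n / c)) \<ge> 0"
        by (intro limsup_scale_nonneg[OF T'(2) ev_of lim])
      with T'(1) g' True show "\<exists>T\<in>Tbar R_S (\<lambda>_. (p, q)). \<exists>\<tau>. growth_function \<tau> \<and> limsup (\<lambda>n. ereal (T (prefix \<omega> n) - \<tau> n)) \<ge> 0"
        by blast
    next
      assume "\<exists>T\<in>Tbar R_S (\<lambda>_. (p, q)). \<exists>\<tau>. growth_function \<tau> \<and> limsup (\<lambda>n. ereal (T (prefix \<omega> n) - \<tau> n)) \<ge> 0"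
      with incl True show "\<exists>T\<in>Tbar R_S (phi_pq \<pi> p q). \<exists>\<tau>. growth_function \<tau> \<and> limsup (\<lambda>n. ereal (T (prefix \<omega> n) - \<tau> n)) \<ge> 0"
        by blast
    qed
    then show ?thesis unfolding random_def using True by simp
  qed
qed


end
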